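(* Let $\gamma=(\gamma_1,\dots,\gamma_b)$ be a parallel map on $V=V_1\oplus\cdots\oplus V_b$, $V_i\cong(\mathbb F_2)^m$ with $m\ge4$, and $0\gamma=0$. Suppose every $\gamma_i$ is differentially $4$-uniform and satisfies $\hat n(\gamma_i)=0$. If $\gamma$ maps $\mathcal L(W)$ onto a non-trivial partition $\mathcal{LA}_U(W_1|W_2)$, then $W$ and $W_1$ are walls and $W=W_1=W_2$; in particular $\mathcal{LA}_U(W_1|W_2)$ is linear.
   Context: Let $b>1$, $n=mb$, $V=(\mathbb F_2)^n=V_1\oplus\cdots\oplus V_b$, $V_i\cong(\mathbb F_2)^m$. Permutations act on the right. A parallel map is $\gamma\in\mathrm{Sym}(V)$ with $(v_1\oplus\cdots\oplus v_b)\gamma=v_1\gamma_1\oplus\cdots\oplus v_b\gamma_b$, $\gamma_i\in\mathrm{Sym}(V_i)$. A wall is $\bigoplus_{i\in I}V_i$ with $\emptyset\ne I\subsetneq\{1,\dots,b\}$. For $f:(\mathbb F_2)^m\to(\mathbb F_2)^m$, $\hat f_a(x)=f(x+a)+f(x)$; $f$ is differentially $\delta$-uniform if $\delta=\max_{a\ne0,b}|\{x:\hat f_a(x)=b\}|$; and $\hat n(f)=\max_{a\ne0}|\{v\in(\mathbb F_2)^m\setminus\{0\}: \text{the Boolean function } x\mapsto\langle\hat f_a(x),v\rangle \text{ is constant}\}|$, where $\langle\cdot,\cdot\rangle$ is the standard dot product. A permutation maps $\mathcal A$ onto $\mathcal B$ if it sends the blocks of $\mathcal A$ exactly onto those of $\mathcal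 B$; trivial partitions are the singleton partition and $\{V\}$. $\mathcal L(W)=\{W+v:v\in V\}$ (linear partition). For a subspace $U$ of dimension $n-1$ and subspaces $W_1,W_2\subseteq U$, $\mathcal{LA}_U(W_1|W_2)=\{W_1+v:v\in U\}\cup\{(W_2+\bar v)+v:v\in U\}$ for any $\bar v\in V\setminus U$. *)

theory Defs
  imports Main "HOL-Library.Z2"
begin

text \<open>Vectors of (F_2)^k are modelled as functions nat => bit vanishing from index k on.\<close>

type_synonym vec = "nat \<Rightarrow> bit"

definition Fv :: "nat \<Rightarrow> vec set" where
  "Fv k = {x. \<forall>j\<ge>k. x j = 0}"

definition vadd :: "vec \<Rightarrow> vec \<Rightarrow> vec" where
  "vadd x y = (\<lambda>j. x j + y j)"

definition vzero :: vec where
  "vzero = (\<lambda>j. 0)"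

definition dotp :: "nat \<Rightarrow> vec \<Rightarrow> vec \<Rightarrow> bit" where
  "dotp k x y = (\<Sum>j<k. x j * y j)"

definition subsp :: "nat \<Rightarrow> vec set \<Rightarrow> bool" where
  "subsp k W \<longleftrightarrow> W \<subseteq> Fv k \<and> vzero \<in> W \<and> (\<forall>x\<in>W. \<forall>y\<in>W. vadd x y \<in> W)"

definition sdim :: "vec set \<Rightarrow> nat" where
  "sdim W = (LEAST d. card W = 2 ^ d)"

text \<open>Block i (0-based, i < b) of V = (F_2)^(m*b) occupies coordinates i*m .. i*m+m-1.\<close>
definition blk :: "nat \<Rightarrow> nat \<Rightarrow> vec \<Rightarrow> vec" where
  "blk m i v = (\<lambda>j. if j < m then v (i * m + j) else 0)"

definition par :: "nat \<Rightarrow> nat \<Rightarrow> (nat \<Rightarrow> vec \<Rightarrow> vec) \<Rightarrow> vec \<Rightarrow> vec" where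
  "par m b g v = (\<lambda>j. if j < m * b then g (j div m) (blk m (j div m) v) (j mod m) else 0)"

definition wall :: "nat \<Rightarrow> nat \<Rightarrow> vec set \<Rightarrow> bool" where
  "wall m b W \<longleftrightarrow> (\<exists>I. I \<noteq> {} \<and> I \<subset> {0..<b} \<and>
      W = {v \<in> Fv (m * b). \<forall>j. j div m \<notin> I \<longrightarrow> v j = 0})"

definition fder :: "(vec \<Rightarrow> vec) \<Rightarrow> vec \<Rightarrow> vec \<Rightarrow> vec" where
  "fder f a x = vadd (f (vadd x a)) (f x)"

definition diff_unif :: "nat \<Rightarrow> (vec \<Rightarrow> vec) \<Rightarrow> nat" where
  "diff_unif m f = Max {card {x \<in> Fv m. fder f a x = c} | a c. a \<in> Fv m \<and> a \<noteq> vzero \<and> c \<in> Fv m}"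

definition nhat :: "nat \<Rightarrow> (vec \<Rightarrow> vec) \<Rightarrow> nat" where
  "nhat m f = Max {card {v \<in> Fv m - {vzero}. \<exists>c. \<forall>x\<in>Fv m. dotp m (fder f a x) v = c} | a. a \<in> Fv m \<and> a \<noteq> vzero}"

definition coset :: "vec set \<Rightarrow> vec \<Rightarrow> vec set" where
  "coset W v = (\<lambda>w. vadd w v) ` W"

definition linpart :: "nat \<Rightarrow> vec set \<Rightarrow> vec set set" where
  "linpart n W = {coset W v | v. v \<in> Fv n}"

text \<open>LA_U(W1|W2); the choice of vbar in V - U does not matter.\<close>
definition LApart :: "nat \<Rightarrow> vec set \<Rightarrow> vec set \<Rightarrow> vec set \<Rightarrow> vec set set" where
  "LApart n U W1 W2 = (let vb = (SOME x. x \<in> Fv n - U) in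
      {coset W1 v | v. v \<in> U} \<union> {coset (coset W2 vb) v | v. v \<in> U})"

definition maps_onto :: "(vec \<Rightarrow> vec) \<Rightarrow> vec set set \<Rightarrow> vec set set \<Rightarrow> bool" where
  "maps_onto f A B \<longleftrightarrow> (\<lambda>X. f ` X) ` A = B"

definition trivial_part :: "nat \<Rightarrow> vec set set \<Rightarrow> bool" where
  "trivial_part n P \<longleftrightarrow> P = {{v} | v. v \<in> Fv n} \<or> P = {Fv n}"

end

theory Submission
  imports Defs
begin


declare add_bit_eq_xor[simp del] mult_bit_eq_and[simp del]

lemma bit_xx[simp]: "(x::bit) + x = 0" by (cases x) simp_all
lemma bit_cc: "(a::bit) + c + (b + c) = a + b" by (cases a; cases b; cases c) simp_all
lemma bit_eq0: "(a::bit) + b = 0 \<Longrightarrow> a = b" by (cases a; cases b) simp_all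

lemma vadd_comm: "vadd x y = vadd y x" by (simp add: vadd_def add.commute)
lemma vadd_assoc: "vadd (vadd x y) z = vadd x (vadd y z)" by (simp add: vadd_def add.assoc)
lemma vadd_self[simp]: "vadd x x = vzero" by (simp add: vadd_def vzero_def)
lemma vadd_zero[simp]: "vadd x vzero = x" "vadd vzero x = x" by (simp_all add: vadd_def vzero_def)
lemma vadd_cancel[simp]: "vadd (vadd x y) y = x" "vadd x (vadd x y) = y"
   apply (simp add: vadd_assoc) apply (simp flip: vadd_assoc) done
lemma vadd_cc: "vadd (vadd a c) (vadd b c) = vadd a b"
  by (simp add: vadd_def fun_eq_iff bit_cc)
lemma vadd_app: "vadd x y j = x j + y j" by (simp add: vadd_def)

lemma Fv_vadd: "x \<in> Fv k \<Longrightarrow> y \<in> Fv k \<Longrightarrow> vadd x y \<in> Fv k"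
  by (simp add: Fv_def vadd_def)
lemma Fv_zero[simp]: "vzero \<in> Fv k" by (simp add: Fv_def vzero_def)

lemma dotp_add: "dotp k (vadd p q) y = dotp k p y + dotp k q y"
  by (simp add: dotp_def vadd_def distrib_right sum.distrib)

lemma Fv_down: assumes "x \<in> Fv (Suc k)" "x k = 0" shows "x \<in> Fv k"
  unfolding Fv_def
proof (intro CollectI allI impI)
  fix j assume "k \<le> j"
  then have "j = k \<or> Suc k \<le> j" by linarith
  then show "x j = 0" using assms by (auto simp: Fv_def)
qed

lemma Fv_suc: "Fv (Suc k) = Fv k \<union> (\<lambda>x. x(k:=1)) ` Fv k"
proof
  show "Fv (Suc k) \<subseteq> Fv k \<union> (\<lambda>x. x(k:=1)) ` Fv k"
  proof
    fix x assume x: "x \<in> Fv (Suc k)"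
    show "x \<in> Fv k \<union> (\<lambda>x. x(k:=1)) ` Fv k"
    proof (cases "x k = 0")
      case True then have "x \<in> Fv k" using x Fv_down by blast
      then show ?thesis by blast
    next
      case False
      have "x(k:=0) \<in> Fv k" using x unfolding Fv_def by auto
      moreover have "x = (x(k:=0))(k:=1)" using False by auto
      ultimately show ?thesis by blast
    qed
  qed
  show "Fv k \<union> (\<lambda>x. x(k:=1)) ` Fv k \<subseteq> Fv (Suc k)" unfolding Fv_def by auto
qed

lemma Fv0: "Fv 0 = {vzero}" by (auto simp: Fv_def vzero_def)

lemma Fv_finite: "finite (Fv k)"
  by (induction k) (auto simp: Fv_suc Fv0)

lemma Fv_card: "card (Fv k) = 2 ^ k"
proof (induction k)
  case 0
  then show ?case by (simp add: Fv0)
next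
  case (Suc k)
  have d: "Fv k \<inter> (\<lambda>x. x(k:=1)) ` Fv k = {}" by (auto simp: Fv_def)
  have i: "inj_on (\<lambda>x. x(k:=1)) (Fv k)"
  proof (rule inj_onI)
    fix x y assume x: "x \<in> Fv k" and y: "y \<in> Fv k" and e: "x(k:=1) = y(k:=1)"
    show "x = y"
    proof
      fix j show "x j = y j"
      proof (cases "j = k")
        case True then show ?thesis using x y by (simp add: Fv_def)
      next
        case False then show ?thesis using fun_cong[OF e, of j] by simp
      qed
    qed
  qed
  have "card (Fv (Suc k)) = card (Fv k) + card ((\<lambda>x. x(k:=1)) ` Fv k)"
    unfolding Fv_suc by (rule card_Un_disjoint) (use d Fv_finite in auto)
  also have "\<dots> = 2 * card (Fv k)" using card_image[OF i] by simp
  finally show ?case using Suc by simp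
qed


lemma dotp_Suc: "dotp (Suc k) s y = dotp k s y + s k * y k"
  by (simp add: dotp_def)

lemma dotp_cong: "(\<And>j. j < k \<Longrightarrow> y j = y' j) \<Longrightarrow> dotp k s y = dotp k s y'"
  by (simp add: dotp_def)

lemma annih: "subsp k S \<Longrightarrow> S \<noteq> Fv k \<Longrightarrow> \<exists>y\<in>Fv k. y \<noteq> vzero \<and> (\<forall>s\<in>S. dotp k s y = 0)"
proof (induction k arbitrary: S)
  case 0
  then show ?case by (auto simp: subsp_def Fv0)
next
  case (Suc k)
  have SF: "S \<subseteq> Fv (Suc k)" and S0: "vzero \<in> S" and Sa: "\<And>x y. x \<in> S \<Longrightarrow> y \<in> S \<Longrightarrow> vadd x y \<in> S"
    using Suc.prems by (auto simp: subsp_def)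
  show ?case
  proof (cases "\<forall>s\<in>S. s k = 0")
    case True
    define y where "y = vzero(k:=1)"
    have "y \<in> Fv (Suc k)" by (auto simp: y_def Fv_def vzero_def)
    moreover have "y \<noteq> vzero" by (auto simp: y_def vzero_def fun_eq_iff)
    moreover have "\<forall>s\<in>S. dotp (Suc k) s y = 0"
      using True by (auto simp: dotp_Suc y_def dotp_def vzero_def)
    ultimately show ?thesis by blast
  next
    case False
    then obtain t where t: "t \<in> S" "t k = 1" by auto
    define K where "K = {s\<in>S. s k = 0}"
    have KF: "K \<subseteq> Fv k" using SF Fv_down unfolding K_def by blast
    have sK: "subsp k K" unfolding subsp_def
    proof (intro conjI ballI)
      show "vzero \<in> K" using S0 by (simp add: K_def vzero_def)
      fix x y assume "x \<in> K" "y \<in> K"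
      then show "vadd x y \<in> K" using Sa by (simp add: K_def vadd_def)
    qed (fact KF)
    show ?thesis
    proof (cases "K = Fv k")
      case True
      have "S = Fv (Suc k)"
      proof
        show "Fv (Suc k) \<subseteq> S"
        proof
          fix z assume z: "z \<in> Fv (Suc k)"
          show "z \<in> S"
          proof (cases "z k = 0")
            case True
            then have "z \<in> Fv k" using z Fv_down by blast
            then have "z \<in> K" using \<open>K = Fv k\<close> by blast
            then show ?thesis unfolding K_def by blast
          next
            case False
            have "vadd z t \<in> Fv (Suc k)" using z t SF Fv_vadd by blast
            moreover have "vadd z t k = 0" using False t by (simp add: vadd_def)
            ultimately have "vadd z t \<in> Fv k" using Fv_down by blast
            then have "vadd z t \<in> K" using \<open>K = Fv k\<close> by blast
            then have "vadd z t \<in> S" unfolding K_def by blast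
            then have "vadd (vadd z t) t \<in> S" using Sa t by blast
            then show ?thesis by simp
          qed
        qed
      qed (fact SF)
      then show ?thesis using Suc.prems by simp
    next
      case False
      from Suc.IH[OF sK False] obtain y' where y': "y' \<in> Fv k" "y' \<noteq> vzero" "\<forall>s\<in>K. dotp k s y' = 0" by blast
      define y where "y = y'(k := dotp k t y')"
      have "y \<in> Fv (Suc k)" using y'(1) by (auto simp: y_def Fv_def)
      moreover have "y \<noteq> vzero"
      proof
        assume "y = vzero"
        have "\<forall>j. y' j = 0"
        proof
          fix j
          show "y' j = 0"
          proof (cases "j = k")
            case True then show ?thesis using y'(1) by (auto simp: Fv_def)
          next
            case False
            have "y j = 0" using \<open>y = vzero\<close> by (simp add: vzero_def)
            then show ?thesis using False by (simp add: y_def)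
          qed
        qed
        then show False using y'(2) by (auto simp: vzero_def fun_eq_iff)
      qed
      moreover have "\<forall>s\<in>S. dotp (Suc k) s y = 0"
      proof
        fix s assume s: "s \<in> S"
        have e: "dotp k s y = dotp k s y'" by (rule dotp_cong) (simp add: y_def)
        show "dotp (Suc k) s y = 0"
        proof (cases "s k = 0")
          case True
          have "s \<in> K" using s True by (simp add: K_def)
          then have "dotp k s y' = 0" using y'(3) by blast
          then show ?thesis using True e by (simp only: dotp_Suc) simp
        next
          case False
          have "vadd s t \<in> S" using s t Sa by blast
          moreover have "vadd s t k = 0" using False t by (simp add: vadd_def)
          ultimately have "vadd s t \<in> K" unfolding K_def by blast
          then have "dotp k s y' + dotp k t y' = 0" using y'(3) dotp_add by metis
          then have "dotp k s y' = dotp k t y'" by (rule bit_eq0)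
          moreover have "y k = dotp k t y'" by (simp add: y_def)
          moreover have "s k = 1" using False by simp
          ultimately show ?thesis using e by (simp only: dotp_Suc) simp
        qed
      qed
      ultimately show ?thesis by blast
    qed
  qed
qed


lemma span_fder:
  assumes nh: "nhat m f = 0" and a: "a \<in> Fv m" "a \<noteq> vzero" and S: "subsp m S"
    and D: "\<forall>x\<in>Fv m. \<forall>x'\<in>Fv m. vadd (fder f a x) (fder f a x') \<in> S"
  shows "S = Fv m"
proof (rule ccontr)
  assume "S \<noteq> Fv m"
  from annih[OF S this] obtain y where y: "y \<in> Fv m" "y \<noteq> vzero" "\<forall>s\<in>S. dotp m s y = 0" by blast
  define A where "A = {v \<in> Fv m - {vzero}. \<exists>c. \<forall>x\<in>Fv m. dotp m (fder f a x) v = c}"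
  have "\<forall>x\<in>Fv m. dotp m (fder f a x) y = dotp m (fder f a vzero) y"
  proof
    fix x assume x: "x \<in> Fv m"
    have "vadd (fder f a x) (fder f a vzero) \<in> S" using D x Fv_zero by blast
    then have "dotp m (vadd (fder f a x) (fder f a vzero)) y = 0" using y(3) by blast
    then have "dotp m (fder f a x) y + dotp m (fder f a vzero) y = 0" by (simp only: dotp_add)
    then show "dotp m (fder f a x) y = dotp m (fder f a vzero) y" by (rule bit_eq0)
  qed
  then have yA: "y \<in> A" using y unfolding A_def by blast
  have finA: "finite A" unfolding A_def by (rule finite_subset[OF _ Fv_finite[of m]]) blast
  have cA: "card A > 0" using yA finA card_gt_0_iff by blast
  have fin: "finite {card {v \<in> Fv m - {vzero}. \<exists>c. \<forall>x\<in>Fv m. dotp m (fder f a x) v = c} | a. a \<in> Fv m \<and> a \<noteq> vzero}"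
    by (rule finite_image_set) (rule finite_subset[OF _ Fv_finite[of m]], blast)
  have mem: "card A \<in> {card {v \<in> Fv m - {vzero}. \<exists>c. \<forall>x\<in>Fv m. dotp m (fder f a x) v = c} | a. a \<in> Fv m \<and> a \<noteq> vzero}"
    unfolding A_def using a by blast
  have "card A \<le> nhat m f" unfolding nhat_def by (rule Max_ge[OF fin mem])
  then show False using nh cA by simp
qed

definition emb :: "nat \<Rightarrow> nat \<Rightarrow> vec \<Rightarrow> vec" where
  "emb m i x = (\<lambda>j. if j div m = i then x (j mod m) else 0)"

lemma idx: "0 < m \<Longrightarrow> j < m \<Longrightarrow> (i * m + j) div m = i \<and> (i * m + j) mod m = (j::nat)"
  by simp

lemma idx_lt: "i < b \<Longrightarrow> j < m \<Longrightarrow> i * m + j < m * (b::nat)"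
proof -
  assume "i < b" "j < m"
  have "Suc i * m \<le> b * m" using \<open>i < b\<close> by (intro mult_le_mono1) simp
  then show ?thesis using \<open>j < m\<close> by (simp add: mult.commute)
qed

lemma div_lt: "j < m * b \<Longrightarrow> j div m < (b::nat)"
  by (simp add: less_mult_imp_div_less mult.commute)

lemma div_ge: "0 < m \<Longrightarrow> m * b \<le> j \<Longrightarrow> b \<le> j div (m::nat)"
proof -
  assume "0 < m" "m * b \<le> j"
  have "(m * b) div m \<le> j div m" using \<open>m * b \<le> j\<close> by (rule div_le_mono)
  then show ?thesis using \<open>0 < m\<close> by simp
qed

lemma blk_at: "0 < m \<Longrightarrow> blk m (j div m) v (j mod m) = v j"
  by (simp add: blk_def)

lemma blk_Fv: "blk m i v \<in> Fv m" by (simp add: blk_def Fv_def)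
lemma blk_add: "blk m i (vadd v w) = vadd (blk m i v) (blk m i w)"
  by (simp add: blk_def vadd_def fun_eq_iff)
lemma blk_zero[simp]: "blk m i vzero = vzero"
  by (simp add: blk_def vzero_def fun_eq_iff)

lemma blk_emb: assumes "0 < m" "x \<in> Fv m" shows "blk m k (emb m i x) = (if k = i then x else vzero)"
proof
  fix j show "blk m k (emb m i x) j = (if k = i then x else vzero) j"
  proof (cases "j < m")
    case True then show ?thesis using assms by (simp add: blk_def emb_def vzero_def)
  next
    case False then show ?thesis using assms by (simp add: blk_def emb_def vzero_def Fv_def)
  qed
qed

lemma emb_Fv: assumes "0 < m" "i < b" shows "emb m i x \<in> Fv (m * b)"
  unfolding Fv_def
proof (intro CollectI allI impI)
  fix j assume "m * b \<le> j"
  then have "b \<le> j div m" using div_ge assms by blast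
  then show "emb m i x j = 0" using assms by (simp add: emb_def)
qed

lemma emb_add: "emb m i (vadd x y) = vadd (emb m i x) (emb m i y)"
  by (simp add: emb_def vadd_def fun_eq_iff)
lemma emb_zero: "emb m i vzero = vzero"
  by (simp add: emb_def vzero_def fun_eq_iff)

lemma par_Fv: "par m b g v \<in> Fv (m * b)" by (simp add: par_def Fv_def)

lemma par_at: "j < m * b \<Longrightarrow> par m b g v j = g (j div m) (blk m (j div m) v) (j mod m)"
  by (simp add: par_def)
lemma par_out: "\<not> j < m * b \<Longrightarrow> par m b g v j = 0"
  by (simp add: par_def)



lemma g0_lemma:
  assumes m0: "0 < m" and gF: "\<forall>i<b. \<forall>x\<in>Fv m. g i x \<in> Fv m" and zero: "par m b g vzero = vzero"
  shows "\<forall>i<b. g i vzero = vzero"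
proof (intro allI impI)
  fix i assume i: "i < b"
  show "g i vzero = vzero"
  proof
    fix j show "g i vzero j = vzero j"
    proof (cases "j < m")
      case True
      have "par m b g vzero (i * m + j) = 0" using zero by (simp add: vzero_def)
      moreover have "par m b g vzero (i * m + j) = g i (blk m i vzero) j"
        using par_at[OF idx_lt[OF i True]] idx[OF m0 True] by simp
      ultimately have "g i (blk m i vzero) j = 0" by simp
      then have "g i vzero j = 0" by simp
      then show ?thesis by (simp add: vzero_def)
    next
      case False
      have "g i vzero \<in> Fv m" using gF i Fv_zero by blast
      then show ?thesis using False by (simp add: Fv_def vzero_def)
    qed
  qed
qed

lemma par_emb:
  assumes m0: "0 < m" and i: "i < b" and x: "x \<in> Fv m" and g0: "\<forall>k<b. g k vzero = vzero"
  shows "par m b g (emb m i x) = emb m i (g i x)"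
proof
  fix j show "par m b g (emb m i x) j = emb m i (g i x) j"
  proof (cases "j < m * b")
    case True
    have k: "j div m < b" using div_lt[OF True] .
    show ?thesis using True blk_emb[OF m0 x, of "j div m" i] g0 k
      by (simp add: par_at emb_def vzero_def)
  next
    case False
    have "b \<le> j div m" using div_ge[OF m0] False by simp
    then show ?thesis using False i by (simp add: par_out emb_def)
  qed
qed

lemma par_inj:
  assumes m0: "0 < m" and ginj: "\<forall>i<b. inj_on (g i) (Fv m)" and gF: "\<forall>i<b. \<forall>x\<in>Fv m. g i x \<in> Fv m"
  shows "inj_on (par m b g) (Fv (m * b))"
proof (rule inj_onI)
  fix v v' assume v: "v \<in> Fv (m * b)" and v': "v' \<in> Fv (m * b)" and e: "par m b g v = par m b g v'"
  have bl: "blk m i v = blk m i v'" if i: "i < b" for i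
  proof -
    have "g i (blk m i v) = g i (blk m i v')"
    proof
      fix j show "g i (blk m i v) j = g i (blk m i v') j"
      proof (cases "j < m")
        case True
        have "par m b g v (i * m + j) = par m b g v' (i * m + j)" using e by simp
        then show ?thesis using par_at[OF idx_lt[OF i True]] idx[OF m0 True] by simp
      next
        case False
        have "g i (blk m i v) \<in> Fv m" "g i (blk m i v') \<in> Fv m" using gF i blk_Fv by blast+
        then show ?thesis using False by (simp add: Fv_def)
      qed
    qed
    then show ?thesis using ginj i blk_Fv unfolding inj_on_def by blast
  qed
  show "v = v'"
  proof
    fix j show "v j = v' j"
    proof (cases "j < m * b")
      case True
      have "blk m (j div m) v (j mod m) = blk m (j div m) v' (j mod m)" using bl[OF div_lt[OF True]] by simp
      then show ?thesis using blk_at[OF m0] by simp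
    next
      case False then show ?thesis using v v' by (simp add: Fv_def)
    qed
  qed
qed

lemma par_surj:
  assumes "inj_on (par m b g) (Fv (m * b))"
  shows "par m b g ` Fv (m * b) = Fv (m * b)"
proof (rule card_subset_eq)
  show "finite (Fv (m * b))" by (rule Fv_finite)
  show "par m b g ` Fv (m * b) \<subseteq> Fv (m * b)" using par_Fv by blast
  show "card (par m b g ` Fv (m * b)) = card (Fv (m * b))" using card_image[OF assms] .
qed

definition VI :: "nat \<Rightarrow> nat \<Rightarrow> nat set \<Rightarrow> vec set" where
  "VI m b I = {v \<in> Fv (m * b). \<forall>j. j div m \<notin> I \<longrightarrow> v j = 0}"

lemma blk_VI: assumes "0 < m" "v \<in> VI m b I" "k \<notin> I" shows "blk m k v = vzero"
proof
  fix j show "blk m k v j = vzero j"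
    using assms by (auto simp: blk_def VI_def vzero_def)
qed

lemma par_VI:
  assumes m0: "0 < m" and g0: "\<forall>k<b. g k vzero = vzero" and v: "v \<in> VI m b I"
  shows "par m b g v \<in> VI m b I"
  unfolding VI_def
proof (intro CollectI conjI allI impI)
  show "par m b g v \<in> Fv (m * b)" by (rule par_Fv)
  fix j assume j: "j div m \<notin> I"
  show "par m b g v j = 0"
  proof (cases "j < m * b")
    case True
    then show ?thesis using blk_VI[OF m0 v j] g0 div_lt[OF True] by (simp add: par_at vzero_def)
  qed (simp add: par_out)
qed

lemma par_diff_VI:
  assumes m0: "0 < m" and y: "y \<in> VI m b I"
  shows "vadd (par m b g (vadd y v)) (par m b g v) \<in> VI m b I"
  unfolding VI_def
proof (intro CollectI conjI allI impI)
  show "vadd (par m b g (vadd y v)) (par m b g v) \<in> Fv (m * b)" by (intro Fv_vadd par_Fv)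
  fix j assume j: "j div m \<notin> I"
  show "vadd (par m b g (vadd y v)) (par m b g v) j = 0"
  proof (cases "j < m * b")
    case True
    have "blk m (j div m) (vadd y v) = blk m (j div m) v" using blk_VI[OF m0 y j] by (simp add: blk_add)
    then show ?thesis using True by (simp add: par_at vadd_def)
  qed (simp add: par_out vadd_def)
qed



lemma Dform:
  assumes m0: "0 < m" and i: "i < b" and x: "x \<in> Fv m" and g0: "\<forall>k<b. g k vzero = vzero"
  shows "vadd (par m b g (vadd w (emb m i x))) (par m b g (emb m i x))
       = vadd (emb m i (fder (g i) (blk m i w) x))
              (\<lambda>j. if j < m * b \<and> j div m \<noteq> i then g (j div m) (blk m (j div m) w) (j mod m) else 0)"
proof
  fix j
  show "vadd (par m b g (vadd w (emb m i x))) (par m b g (emb m i x)) j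
       = vadd (emb m i (fder (g i) (blk m i w) x))
              (\<lambda>j. if j < m * b \<and> j div m \<noteq> i then g (j div m) (blk m (j div m) w) (j mod m) else 0) j"
  proof (cases "j < m * b")
    case True
    define k where "k = j div m"
    have k: "k < b" using div_lt[OF True] k_def by simp
    have be: "blk m k (emb m i x) = (if k = i then x else vzero)" by (rule blk_emb[OF m0 x])
    show ?thesis
    proof (cases "k = i")
      case True
      have "blk m k (vadd w (emb m i x)) = vadd (blk m i w) x" using be True by (simp add: blk_add)
      then show ?thesis using \<open>j < m * b\<close> be True
        by (simp add: par_at vadd_def emb_def fder_def k_def[symmetric] add.commute)
    next
      case False
      have "blk m k (vadd w (emb m i x)) = blk m k w" using be False by (simp add: blk_add)
      then show ?thesis using \<open>j < m * b\<close> be False g0 k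
        by (simp add: par_at vadd_def emb_def k_def[symmetric] vzero_def)
    qed
  next
    case False
    have "b \<le> j div m" using div_ge[OF m0] False by simp
    then show ?thesis using False i by (simp add: par_out emb_def vadd_def)
  qed
qed

lemma fder_Fv: "\<forall>x\<in>Fv m. f x \<in> Fv m \<Longrightarrow> a \<in> Fv m \<Longrightarrow> x \<in> Fv m \<Longrightarrow> fder f a x \<in> Fv m"
  by (simp add: fder_def Fv_vadd)

lemma key:
  assumes m0: "0 < m" and i: "i < b" and gF: "\<forall>x\<in>Fv m. g i x \<in> Fv m"
    and g0: "\<forall>k<b. g k vzero = vzero" and nh: "nhat m (g i) = 0"
    and a: "blk m i w \<noteq> vzero" and S: "subsp (m * b) S"
    and D: "\<forall>x\<in>Fv m. vadd (par m b g (vadd w (emb m i x))) (par m b g (emb m i x)) \<in> S"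
  shows "\<forall>z\<in>Fv m. emb m i z \<in> S"
proof -
  define C where "C = (\<lambda>j. if j < m * b \<and> j div m \<noteq> i then g (j div m) (blk m (j div m) w) (j mod m) else 0)"
  define S' where "S' = {z \<in> Fv m. emb m i z \<in> S}"
  have Sa: "\<And>p q. p \<in> S \<Longrightarrow> q \<in> S \<Longrightarrow> vadd p q \<in> S" using S by (simp add: subsp_def)
  have sS': "subsp m S'" unfolding subsp_def S'_def
    using S Fv_vadd by (auto simp: subsp_def emb_add emb_zero)
  have "\<forall>x\<in>Fv m. \<forall>x'\<in>Fv m. vadd (fder (g i) (blk m i w) x) (fder (g i) (blk m i w) x') \<in> S'"
  proof (intro ballI)
    fix x x' assume x: "x \<in> Fv m" and x': "x' \<in> Fv m"
    have "vadd (vadd (par m b g (vadd w (emb m i x))) (par m b g (emb m i x)))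
               (vadd (par m b g (vadd w (emb m i x'))) (par m b g (emb m i x'))) \<in> S"
      using D x x' Sa by blast
    then have "vadd (vadd (emb m i (fder (g i) (blk m i w) x)) C) (vadd (emb m i (fder (g i) (blk m i w) x')) C) \<in> S"
      using Dform[where g=g and w=w, OF m0 i x g0] Dform[where g=g and w=w, OF m0 i x' g0] unfolding C_def by simp
    then have "emb m i (vadd (fder (g i) (blk m i w) x) (fder (g i) (blk m i w) x')) \<in> S"
      by (simp add: vadd_cc emb_add)
    moreover have "vadd (fder (g i) (blk m i w) x) (fder (g i) (blk m i w) x') \<in> Fv m"
      using fder_Fv[OF gF blk_Fv] x x' Fv_vadd by blast
    ultimately show "vadd (fder (g i) (blk m i w) x) (fder (g i) (blk m i w) x') \<in> S'"
      unfolding S'_def by blast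
  qed
  then have "S' = Fv m" using span_fder[OF nh blk_Fv a sS'] by blast
  then show ?thesis unfolding S'_def by blast
qed

lemma coset_sub: "subsp k A \<Longrightarrow> u \<in> A \<Longrightarrow> coset A u = A"
proof -
  assume A: "subsp k A" and u: "u \<in> A"
  have Aa: "\<And>p q. p \<in> A \<Longrightarrow> q \<in> A \<Longrightarrow> vadd p q \<in> A" using A by (simp add: subsp_def)
  show ?thesis
  proof
    show "coset A u \<subseteq> A" using Aa u by (auto simp: coset_def)
    show "A \<subseteq> coset A u"
    proof
      fix x assume "x \<in> A"
      then have "vadd x u \<in> A" using Aa u by blast
      moreover have "x = vadd (vadd x u) u" by simp
      ultimately show "x \<in> coset A u" unfolding coset_def by blast
    qed
  qed
qed

lemma coset_coset: "coset (coset A p) q = coset A (vadd p q)"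
  unfolding coset_def image_image by (simp add: vadd_assoc)

lemma coset_mem: "x \<in> coset A p \<longleftrightarrow> vadd x p \<in> A"
proof
  assume "x \<in> coset A p" then show "vadd x p \<in> A" by (auto simp: coset_def)
next
  assume "vadd x p \<in> A"
  moreover have "x = vadd (vadd x p) p" by simp
  ultimately show "x \<in> coset A p" unfolding coset_def by blast
qed

lemma coset_eq_sub:
  assumes A: "subsp k A" and B: "subsp k B" and e: "coset A p = coset B q"
  shows "A \<subseteq> B"
proof
  have Ba: "\<And>x y. x \<in> B \<Longrightarrow> y \<in> B \<Longrightarrow> vadd x y \<in> B" using B by (simp add: subsp_def)
  have "p \<in> coset A p" using A by (simp add: coset_mem subsp_def)
  then have b0: "vadd p q \<in> B" using e by (simp add: coset_mem)
  fix x assume "x \<in> A"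
  then have "vadd x p \<in> coset A p" by (simp add: coset_mem)
  then have "vadd (vadd x p) q \<in> B" using e by (simp add: coset_mem)
  then have "vadd (vadd (vadd x p) q) (vadd p q) \<in> B" using Ba b0 by blast
  moreover have "vadd (vadd (vadd x p) q) (vadd p q) = x"
    by (simp add: vadd_assoc)
  ultimately show "x \<in> B" by simp
qed

lemma LAblk:
  assumes vb: "vb \<notin> U" and U: "subsp k U" and W1: "subsp k W1" "W1 \<subseteq> U" and W2: "subsp k W2" "W2 \<subseteq> U"
    and B: "B \<in> {coset W1 v | v. v \<in> U} \<union> {coset (coset W2 vb) v | v. v \<in> U}"
    and p: "p \<in> B" and q: "q \<in> B"
  shows "vadd p q \<in> U \<and> (p \<in> U \<longrightarrow> vadd p q \<in> W1)"
proof -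
  have W1a: "\<And>x y. x \<in> W1 \<Longrightarrow> y \<in> W1 \<Longrightarrow> vadd x y \<in> W1" using W1 by (simp add: subsp_def)
  have W2a: "\<And>x y. x \<in> W2 \<Longrightarrow> y \<in> W2 \<Longrightarrow> vadd x y \<in> W2" using W2 by (simp add: subsp_def)
  have Ua: "\<And>x y. x \<in> U \<Longrightarrow> y \<in> U \<Longrightarrow> vadd x y \<in> U" using U by (simp add: subsp_def)
  from B show ?thesis
  proof
    assume "B \<in> {coset W1 v | v. v \<in> U}"
    then obtain v where v: "v \<in> U" "B = coset W1 v" by blast
    then have "vadd p v \<in> W1" "vadd q v \<in> W1" using p q by (simp_all add: coset_mem)
    then have "vadd (vadd p v) (vadd q v) \<in> W1" using W1a by blast
    then have "vadd p q \<in> W1" by (simp add: vadd_cc)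
    then show ?thesis using W1 by blast
  next
    assume "B \<in> {coset (coset W2 vb) v | v. v \<in> U}"
    then obtain v where v: "v \<in> U" "B = coset W2 (vadd vb v)" by (auto simp: coset_coset)
    then have h: "vadd p (vadd vb v) \<in> W2" "vadd q (vadd vb v) \<in> W2" using p q by (simp_all add: coset_mem)
    then have "vadd (vadd p (vadd vb v)) (vadd q (vadd vb v)) \<in> W2" using W2a by blast
    then have "vadd p q \<in> W2" by (simp add: vadd_cc)
    moreover have "p \<notin> U"
    proof
      assume "p \<in> U"
      have "vadd p (vadd vb v) \<in> U" using h W2 by blast
      then have "vadd p (vadd p (vadd vb v)) \<in> U" using Ua \<open>p \<in> U\<close> by blast
      then have "vadd vb v \<in> U" by simp
      then have "vadd (vadd vb v) v \<in> U" using Ua v by blast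
      then show False using vb by simp
    qed
    ultimately show ?thesis using W2 by blast
  qed
qed



lemma VI_sub:
  assumes m0: "0 < m" and fin: "finite J" and S: "subsp (m * b) S"
    and e: "\<forall>i\<in>J. \<forall>z\<in>Fv m. emb m i z \<in> S"
  shows "VI m b J \<subseteq> S"
  using fin e
proof (induction J rule: finite_induct)
  case empty
  have "v = vzero" if "v \<in> VI m b {}" for v using that by (auto simp: VI_def vzero_def)
  then show ?case using S by (auto simp: subsp_def)
next
  case (insert i J)
  have Sa: "\<And>p q. p \<in> S \<Longrightarrow> q \<in> S \<Longrightarrow> vadd p q \<in> S" using S by (simp add: subsp_def)
  show ?case
  proof
    fix v assume v: "v \<in> VI m b (insert i J)"
    define v' where "v' = (\<lambda>j. if j div m = i then 0 else v j)"
    have "v' \<in> VI m b J" using v unfolding VI_def v'_def Fv_def by auto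
    then have "v' \<in> S" using insert.IH insert.prems by blast
    moreover have "emb m i (blk m i v) \<in> S" using insert.prems blk_Fv by blast
    ultimately have "vadd v' (emb m i (blk m i v)) \<in> S" using Sa by blast
    moreover have "vadd v' (emb m i (blk m i v)) = v"
    proof
      fix j show "vadd v' (emb m i (blk m i v)) j = v j"
      proof (cases "j div m = i")
        case True
        then have "blk m i v (j mod m) = v j" using blk_at[OF m0, of j v] by simp
        then show ?thesis using True by (simp add: vadd_def v'_def emb_def)
      next
        case False then show ?thesis by (simp add: vadd_def v'_def emb_def)
      qed
    qed
    ultimately show "v \<in> S" by simp
  qed
qed

lemma vadd_inj: "inj_on (\<lambda>w. vadd w v) A"
proof (rule inj_onI)
  fix x y assume "vadd x v = vadd y v"
  then have "vadd (vadd x v) v = vadd (vadd y v) v" by simp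
  then show "x = y" by simp
qed

lemma coset_card: "card (coset A v) = card A"
  unfolding coset_def by (rule card_image[OF vadd_inj])

lemma coset_Fv: "subsp k A \<Longrightarrow> v \<in> Fv k \<Longrightarrow> coset A v \<subseteq> Fv k"
  unfolding coset_def subsp_def using Fv_vadd by blast

theorem lemma3p15:
  fixes m b :: nat and g :: "nat \<Rightarrow> vec \<Rightarrow> vec" and W U W1 W2 :: "vec set"
  assumes "b > 1" and "m \<ge> 4"
    and perm: "\<forall>i<b. bij_betw (g i) (Fv m) (Fv m)"
    and zero: "par m b g vzero = vzero"
    and du: "\<forall>i<b. diff_unif m (g i) = 4"
    and nh: "\<forall>i<b. nhat m (g i) = 0"
    and W: "subsp (m * b) W"
    and U: "subsp (m * b) U" "sdim U = m * b - 1"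
    and W12: "subsp (m * b) W1" "W1 \<subseteq> U" "subsp (m * b) W2" "W2 \<subseteq> U"
    and nontriv: "\<not> trivial_part (m * b) (LApart (m * b) U W1 W2)"
    and maps: "maps_onto (par m b g) (linpart (m * b) W) (LApart (m * b) U W1 W2)"
  shows "wall m b W \<and> wall m b W1 \<and> W = W1 \<and> W = W2
         \<and> LApart (m * b) U W1 W2 = linpart (m * b) W1"
proof -
  have m0: "0 < m" using assms(2) by simp
  have mb: "0 < m * b" using assms(1,2) by simp
  have gF: "\<forall>i<b. \<forall>x\<in>Fv m. g i x \<in> Fv m"
  proof (intro allI impI ballI)
    fix i x assume "i < b" "x \<in> Fv m"
    then show "g i x \<in> Fv m" using perm bij_betw_apply[of "g i" "Fv m" "Fv m" x] by simp
  qed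
  have ginj: "\<forall>i<b. inj_on (g i) (Fv m)" using perm by (simp add: bij_betw_def)
  have g0: "\<forall>i<b. g i vzero = vzero" by (rule g0_lemma[OF m0 gF zero])
  have pinj: "inj_on (par m b g) (Fv (m * b))" by (rule par_inj[OF m0 ginj gF])
  have psurj: "par m b g ` Fv (m * b) = Fv (m * b)" by (rule par_surj[OF pinj])
  have WF: "W \<subseteq> Fv (m * b)" and W0: "vzero \<in> W" using W by (auto simp: subsp_def)
  have UF: "U \<subseteq> Fv (m * b)" and U0: "vzero \<in> U" using U by (auto simp: subsp_def)
  have UnF: "U \<noteq> Fv (m * b)"
  proof
    assume "U = Fv (m * b)"
    then have cU: "card U = 2 ^ (m * b)" by (simp add: Fv_card)
    have "(LEAST d. (2::nat) ^ (m * b) = 2 ^ d) = m * b"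
      by (rule Least_equality) auto
    then have "sdim U = m * b" by (simp add: sdim_def cU)
    moreover have "m * b - 1 < m * b" by (rule diff_less[OF zero_less_one mb])
    ultimately show False using U(2) by linarith
  qed
  define vb where "vb = (SOME x. x \<in> Fv (m * b) - U)"
  have "\<exists>x. x \<in> Fv (m * b) - U" using UF UnF by blast
  then have vb: "vb \<in> Fv (m * b) - U" unfolding vb_def by (rule someI_ex)
  define LA where "LA = LApart (m * b) U W1 W2"
  have LAe: "LA = {coset W1 v | v. v \<in> U} \<union> {coset (coset W2 vb) v | v. v \<in> U}"
    by (simp add: LA_def LApart_def vb_def Let_def)
  have LAm: "(\<lambda>X. par m b g ` X) ` linpart (m * b) W = LA"
    using maps by (simp add: maps_onto_def LA_def)
  have blockLA: "par m b g ` coset W v \<in> LA" if "v \<in> Fv (m * b)" for v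
    using LAm that unfolding linpart_def by blast
  have Wc0: "coset W vzero = W" by (rule coset_sub[OF W W0])
  have blk_pair: "vadd p q \<in> U \<and> (p \<in> U \<longrightarrow> vadd p q \<in> W1)" if "B \<in> LA" "p \<in> B" "q \<in> B" for B p q
    using LAblk[of vb U "m * b" W1 W2 B p q] vb U(1) W12 that LAe by blast
  have W1eq: "par m b g ` W = W1"
  proof -
    have inLA: "par m b g ` W \<in> LA" using blockLA[of vzero] Wc0 by simp
    have z: "vzero \<in> par m b g ` W" using zero W0 by force
    from inLA[unfolded LAe] show ?thesis
    proof
      assume "par m b g ` W \<in> {coset W1 v | v. v \<in> U}"
      then obtain u where u: "u \<in> U" "par m b g ` W = coset W1 u" by blast
      then have "u \<in> W1" using z by (simp add: coset_mem)
      then show ?thesis using u coset_sub[OF W12(1)] by simp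
    next
      assume "par m b g ` W \<in> {coset (coset W2 vb) v | v. v \<in> U}"
      then obtain u where u: "u \<in> U" "par m b g ` W = coset W2 (vadd vb u)" by (auto simp: coset_coset)
      then have "vadd vb u \<in> W2" using z by (simp add: coset_mem)
      then have "vadd vb u \<in> U" using W12 by blast
      moreover have "\<forall>x\<in>U. \<forall>y\<in>U. vadd x y \<in> U" using U(1) by (simp add: subsp_def)
      ultimately have "vadd (vadd vb u) u \<in> U" using u(1) by blast
      then show ?thesis using vb by simp
    qed
  qed
  define I where "I = {i. i < b \<and> (\<exists>w\<in>W. blk m i w \<noteq> vzero)}"
  have Ib: "I \<subseteq> {0..<b}" by (auto simp: I_def)
  have finI: "finite I" using Ib finite_subset by blast
  have WVI: "W \<subseteq> VI m b I"
  proof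
    fix w assume w: "w \<in> W"
    show "w \<in> VI m b I" unfolding VI_def
    proof (intro CollectI conjI allI impI)
      show "w \<in> Fv (m * b)" using w WF by blast
      fix j assume j: "j div m \<notin> I"
      show "w j = 0"
      proof (cases "j < m * b")
        case True
        then have "blk m (j div m) w = vzero" using j w div_lt[OF True] by (auto simp: I_def)
        then show ?thesis using blk_at[OF m0, of j w] by (simp add: vzero_def)
      next
        case False then show ?thesis using w WF by (auto simp: Fv_def)
      qed
    qed
  qed
  have embW1: "\<forall>z\<in>Fv m. emb m i z \<in> W1" if iI: "i \<in> I" for i
  proof -
    from iI obtain w where i: "i < b" and w: "w \<in> W" "blk m i w \<noteq> vzero" by (auto simp: I_def)
    have pq: "par m b g (vadd w (emb m i x)) \<in> par m b g ` coset W (emb m i x)"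
             "par m b g (emb m i x) \<in> par m b g ` coset W (emb m i x)" for x
    proof -
      show "par m b g (vadd w (emb m i x)) \<in> par m b g ` coset W (emb m i x)"
        using w(1) unfolding coset_def by blast
      have "emb m i x = vadd vzero (emb m i x)" by simp
      then show "par m b g (emb m i x) \<in> par m b g ` coset W (emb m i x)"
        using W0 unfolding coset_def by blast
    qed
    have bl: "par m b g ` coset W (emb m i x) \<in> LA" for x
      using blockLA emb_Fv[OF m0 i] by blast
    have DU: "\<forall>x\<in>Fv m. vadd (par m b g (vadd w (emb m i x))) (par m b g (emb m i x)) \<in> U"
      using blk_pair[OF bl pq(1) pq(2)] by blast
    have eU: "\<forall>z\<in>Fv m. emb m i z \<in> U"
      by (rule key[where g=g, OF m0 i _ g0 _ w(2) U(1) DU]) (use gF nh i in auto)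
    have DW: "\<forall>x\<in>Fv m. vadd (par m b g (vadd w (emb m i x))) (par m b g (emb m i x)) \<in> W1"
    proof
      fix x assume x: "x \<in> Fv m"
      have "par m b g (emb m i x) = emb m i (g i x)" by (rule par_emb[where g=g, OF m0 i x g0])
      then have "par m b g (emb m i x) \<in> U" using eU gF i x by simp
      then have "vadd (par m b g (emb m i x)) (par m b g (vadd w (emb m i x))) \<in> W1"
        using blk_pair[OF bl pq(2) pq(1)] by blast
      then show "vadd (par m b g (vadd w (emb m i x))) (par m b g (emb m i x)) \<in> W1"
        by (simp add: vadd_comm)
    qed
    show ?thesis
      by (rule key[where g=g, OF m0 i _ g0 _ w(2) W12(1) DW]) (use gF nh i in auto)
  qed
  have VIW1: "VI m b I \<subseteq> W1" by (rule VI_sub[OF m0 finI W12(1)]) (use embW1 in blast)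
  have W1VI: "W1 \<subseteq> VI m b I" using W1eq WVI par_VI[where g=g and I=I, OF m0 g0] by blast
  have W1e: "W1 = VI m b I" using VIW1 W1VI by blast
  have finW1: "finite W1" using W12(1) Fv_finite finite_subset by (auto simp: subsp_def)
  have "card W = card W1" using W1eq card_image[OF inj_on_subset[OF pinj WF]] by simp
  then have WW1: "W = W1" using card_subset_eq[OF finW1] WVI W1e by blast
  have WeVI: "W = VI m b I" using WW1 W1e by simp
  have cimg: "par m b g ` coset W v = coset W (par m b g v)" if v: "v \<in> Fv (m * b)" for v
  proof (rule card_subset_eq)
    show "finite (coset W (par m b g v))" unfolding coset_def using finW1 WW1 by simp
    show "par m b g ` coset W v \<subseteq> coset W (par m b g v)"
    proof
      fix y assume "y \<in> par m b g ` coset W v"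
      then obtain x where x: "x \<in> W" "y = par m b g (vadd x v)" unfolding coset_def by blast
      have "x \<in> VI m b I" using x WeVI by simp
      from par_diff_VI[where g=g and v=v, OF m0 this]
      have "vadd y (par m b g v) \<in> VI m b I" using x by simp
      then have "vadd y (par m b g v) \<in> W" using WeVI by simp
      then show "y \<in> coset W (par m b g v)" by (simp add: coset_mem)
    qed
    have "card (par m b g ` coset W v) = card (coset W v)"
      using card_image[OF inj_on_subset[OF pinj coset_Fv[OF W v]]] .
    then show "card (par m b g ` coset W v) = card (coset W (par m b g v))"
      by (simp add: coset_card)
  qed
  have LAlin: "LA = linpart (m * b) W"
  proof
    show "LA \<subseteq> linpart (m * b) W"
    proof
      fix X assume "X \<in> LA"
      then obtain v where v: "v \<in> Fv (m * b)" "X = par m b g ` coset W v"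
        using LAm unfolding linpart_def by blast
      then have "X = coset W (par m b g v)" using cimg by simp
      moreover have "par m b g v \<in> Fv (m * b)" by (rule par_Fv)
      ultimately show "X \<in> linpart (m * b) W" unfolding linpart_def by blast
    qed
    show "linpart (m * b) W \<subseteq> LA"
    proof
      fix X assume "X \<in> linpart (m * b) W"
      then obtain z where z: "z \<in> Fv (m * b)" "X = coset W z" unfolding linpart_def by blast
      then obtain v where v: "v \<in> Fv (m * b)" "z = par m b g v" using psurj by blast
      then have "X = par m b g ` coset W v" using z cimg by simp
      then show "X \<in> LA" using blockLA v by simp
    qed
  qed
  have "coset (coset W2 vb) vzero \<in> LA" using LAe U0 by blast
  then have "coset W2 vb \<in> linpart (m * b) W" using LAlin by (simp add: coset_coset)
  then obtain z where cz: "coset W2 vb = coset W z" unfolding linpart_def by blast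
  have "W2 \<subseteq> W" by (rule coset_eq_sub[OF W12(3) W cz])
  moreover have "W \<subseteq> W2" by (rule coset_eq_sub[OF W W12(3) cz[symmetric]])
  ultimately have WW2: "W = W2" by blast
  have "I \<noteq> {}"
  proof
    assume "I = {}"
    then have "W = {vzero}" using WeVI W0 by (auto simp: VI_def vzero_def)
    then have "linpart (m * b) W = {{v} | v. v \<in> Fv (m * b)}"
      by (auto simp: linpart_def coset_def)
    then show False using nontriv LAlin by (simp add: trivial_part_def LA_def)
  qed
  moreover have "I \<noteq> {0..<b}"
  proof
    assume "I = {0..<b}"
    have "W = Fv (m * b)"
    proof
      show "Fv (m * b) \<subseteq> W"
      proof
        fix v assume v: "v \<in> Fv (m * b)"
        have "\<forall>j. j div m \<notin> I \<longrightarrow> v j = 0"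
        proof (intro allI impI)
          fix j assume "j div m \<notin> I"
          then have "\<not> j < m * b" using div_lt \<open>I = {0..<b}\<close> by auto
          then show "v j = 0" using v by (simp add: Fv_def)
        qed
        then show "v \<in> W" using v WeVI by (simp add: VI_def)
      qed
    qed (fact WF)
    moreover have "subsp (m * b) (Fv (m * b))" by (simp add: subsp_def Fv_vadd)
    ultimately have "coset W v = Fv (m * b)" if "v \<in> Fv (m * b)" for v
      using coset_sub that by blast
    then have "linpart (m * b) W = {Fv (m * b)}" using Fv_zero unfolding linpart_def by blast
    then show False using nontriv LAlin by (simp add: trivial_part_def LA_def)
  qed
  ultimately have Ip: "I \<noteq> {} \<and> I \<subset> {0..<b}" using Ib by blast
  have wW: "wall m b W" unfolding wall_def using Ip WeVI by (auto simp: VI_def)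
  show ?thesis using wW WW1 WW2 LAlin by (simp add: LA_def)
qed

end
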